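(* Let $n,m$ be positive integers. The player can win the $(n,m)$-game if and only if $n=1$, or $m=1$, or $(n,m)=(p^a,p^b)$ for some prime $p$ and some positive integers $a,b$.
   Context: The $(n,m)$-game: $n$ counters sit at positions $1,\dots,n$, the vertices (in cyclic order) of a regular $n$-gon table, the labels being fixed from the player's perspective. Each counter shows an element of $\mathbb{Z}_m$, so a configuration is a vector in $\mathbb{Z}_m^n$. The initial configuration is arbitrary and unknown to the player. Each turn the (blindfolded) player chooses a move $y\in\mathbb{Z}_m^n$, which is added coordinatewise to the current configuration; then the table is rotated by an arbitrary, adversarially chosen amount $k\in\mathbb{Z}_n$ (possibly different each turn), i.e. the configuration $x$ is replaced by $x'$ with $x'_{i+k}=x_i$ (indices mod $n$). The player wins if at some moment (including initially) all counters show $0$. Since the player receives no information, a strategy is a finite sequence of moves $y_1,\dots,y_N$; it is winning if for every initial configuration and every choice of rotations the configuration equals the zero vector at some time. "The player can win" means a winning finite sequence exists. *)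

theory Defs
  imports "HOL-Computational_Algebra.Primes"
begin

text \<open>Configurations of the (n,m)-game: vectors in Z_m^n, represented as functions
  nat => nat with values < m on positions 0..n-1 (positions 1..n of the paper shifted
  by one) and value 0 outside.\<close>

definition config :: "nat \<Rightarrow> nat \<Rightarrow> (nat \<Rightarrow> nat) \<Rightarrow> bool" where
  "config n m x \<longleftrightarrow> (\<forall>i<n. x i < m) \<and> (\<forall>i\<ge>n. x i = 0)"

definition add_cfg :: "nat \<Rightarrow> nat \<Rightarrow> (nat \<Rightarrow> nat) \<Rightarrow> (nat \<Rightarrow> nat) \<Rightarrow> (nat \<Rightarrow> nat)" where
  "add_cfg n m x y = (\<lambda>i. if i < n then (x i + y i) mod m else 0)"

text \<open>Rotation by k: the new configuration x' satisfies x'_{(i+k) mod n} = x_i.\<close>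
definition rot_cfg :: "nat \<Rightarrow> nat \<Rightarrow> (nat \<Rightarrow> nat) \<Rightarrow> (nat \<Rightarrow> nat)" where
  "rot_cfg n k x = (\<lambda>j. if j < n then x ((j + n - k mod n) mod n) else 0)"

fun state :: "nat \<Rightarrow> nat \<Rightarrow> (nat \<Rightarrow> nat) \<Rightarrow> (nat \<Rightarrow> nat) list \<Rightarrow> nat list \<Rightarrow> nat \<Rightarrow> (nat \<Rightarrow> nat)" where
  "state n m x ys ks 0 = x"
| "state n m x ys ks (Suc t) = rot_cfg n (ks ! t) (add_cfg n m (state n m x ys ks t) (ys ! t))"

definition winning :: "nat \<Rightarrow> nat \<Rightarrow> (nat \<Rightarrow> nat) list \<Rightarrow> bool" where
  "winning n m ys \<longleftrightarrow> (\<forall>y\<in>set ys. config n m y) \<and>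
     (\<forall>x ks. config n m x \<longrightarrow> length ks = length ys \<longrightarrow> (\<forall>k\<in>set ks. k < n) \<longrightarrow>
        (\<exists>t\<le>length ys. state n m x ys ks t = (\<lambda>_. 0)))"

definition player_can_win :: "nat \<Rightarrow> nat \<Rightarrow> bool" where
  "player_can_win n m \<longleftrightarrow> (\<exists>ys. winning n m ys)"

end

theory Submission
  imports Defs "HOL-Computational_Algebra.Polynomial"
begin


lemma dvd_pow_diff: fixes x :: "'a::comm_ring_1" shows "x - y dvd x^n - y^n"
  using power_diff_sumr2[of x n y] by (metis dvd_triv_left)

lemma frob1:
  fixes u :: "'a::comm_ring_1"
  assumes p: "prime p"
  shows "of_nat p dvd ((u - 1)^p - (u^p - 1))"
proof -
  have p2: "p \<ge> 2" using p prime_ge_2_nat by blast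
  define f where "f k = of_nat (p choose k) * u^k * (-1::'a)^(p-k)" for k
  have "(u - 1)^p = (\<Sum>k\<le>p. f k)" using binomial_ring[of u "-1" p] by (simp add: f_def)
  also have "{..p} = insert 0 (insert p {1..<p})" using p2 by auto
  also have "(\<Sum>k\<in>insert 0 (insert p {1..<p}). f k) = f 0 + (f p + (\<Sum>k\<in>{1..<p}. f k))"
    using p2 by (subst sum.insert; auto)+
  finally have eq: "(u - 1)^p - (u^p - 1) = (f 0 + 1) + (\<Sum>k\<in>{1..<p}. f k)"
    by (simp add: f_def)
  have d1: "of_nat p dvd (f 0 + 1)"
  proof (cases "odd p")
    case True then show ?thesis by (simp add: f_def)
  next
    case False
    then have "p = 2" using p prime_odd_nat p2 using prime_odd_nat[OF p] p2 by (cases "p > 2") auto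
    then show ?thesis by (simp add: f_def)
  qed
  have d2: "of_nat p dvd (\<Sum>k\<in>{1..<p}. f k)"
  proof (rule dvd_sum)
    fix k assume "k \<in> {1..<p}"
    then have "p dvd (p choose k)" using dvd_choose_prime[of k p] p by auto
    then obtain c where "p choose k = p * c" by blast
    then show "of_nat p dvd f k" by (simp add: f_def mult.assoc)
  qed
  show ?thesis unfolding eq using d1 d2 by (rule dvd_add)
qed

lemma frob:
  fixes u :: "'a::comm_ring_1"
  assumes p: "prime p"
  shows "of_nat p dvd ((u - 1)^(p^a) - (u^(p^a) - 1))"
proof (induction a)
  case 0 then show ?case by simp
next
  case (Suc a)
  define v where "v = u^(p^a) - 1"
  have A: "of_nat p dvd ((u-1)^(p^a))^p - v^p"
    using dvd_trans[OF Suc[folded v_def] dvd_pow_diff[of "(u-1)^(p^a)" v p]] .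
  have B: "of_nat p dvd v^p - ((u^(p^a))^p - 1)" using frob1[OF p, of "u^(p^a)"] by (simp add: v_def)
  have "(u - 1)^(p^Suc a) - (u^(p^Suc a) - 1) = (((u-1)^(p^a))^p - v^p) + (v^p - ((u^(p^a))^p - 1))"
    by (simp add: power_mult[symmetric] mult.commute)
  then show ?case using dvd_add[OF A B] by (simp only:)
qed

lemma nilp_poly:
  fixes u :: "'a::comm_ring_1"
  assumes p: "prime p"
  shows "\<exists>A C. (u - 1)^(p^a * b) = (u^(p^a) - 1) * A + of_nat (p^b) * C"
proof -
  obtain c where c: "(u - 1)^(p^a) - (u^(p^a) - 1) = of_nat p * c" using frob[OF p, of u a] by blast
  define q where "q = u^(p^a) - 1"
  have qc: "(u - 1)^(p^a) = q + of_nat p * c" using c by (simp add: q_def algebra_simps)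
  have "(u-1)^(p^a*b) = (q + of_nat p * c)^b" by (simp add: power_mult qc)
  moreover have "q dvd (q + of_nat p * c)^b - (of_nat p * c)^b"
    using dvd_pow_diff[of "q + of_nat p * c" "of_nat p * c" b] by simp
  then obtain A where "(q + of_nat p * c)^b - (of_nat p * c)^b = q * A" by blast
  ultimately have "(u-1)^(p^a*b) = q * A + of_nat (p^b) * c^b" by (simp add: power_mult_distrib algebra_simps)
  then show ?thesis unfolding q_def by blast
qed



definition zc :: "nat \<Rightarrow> nat" where "zc = (\<lambda>_. 0)"
definition neg_cfg :: "nat \<Rightarrow> nat \<Rightarrow> (nat \<Rightarrow> nat) \<Rightarrow> (nat \<Rightarrow> nat)" where
  "neg_cfg n m x = (\<lambda>i. if i < n then (m - x i) mod m else 0)"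

lemma idx_int: assumes "0 < n" "j < n"
  shows "int ((j + n - k mod n) mod n) = (int j - int k) mod int n"
proof -
  have "k mod n < n" using assms by simp
  then have "int (j + n - k mod n) = int j + int n - int (k mod n)" by simp
  then have "int ((j + n - k mod n) mod n) = (int j + int n - int (k mod n)) mod int n"
    by (metis of_nat_mod)
  also have "\<dots> = (int j + int n - int k mod int n) mod int n" by (simp add: of_nat_mod)
  also have "\<dots> = (int j + int n - int k) mod int n" by (simp add: mod_diff_right_eq)
  also have "int j + int n - int k = (int j - int k) + int n" by simp
  also have "((int j - int k) + int n) mod int n = (int j - int k) mod int n" by (rule mod_add_self2)
  finally show ?thesis .
qed

context
  fixes n m :: nat
  assumes n: "0 < n" and m: "0 < m"
begin

lemma config_add[simp]: "config n m (add_cfg n m x y)"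
  using m by (simp add: config_def add_cfg_def)

lemma config_zc[simp]: "config n m zc" using m by (simp add: config_def zc_def)

lemma config_neg[simp]: "config n m (neg_cfg n m x)"
  using m by (simp add: config_def neg_cfg_def)

lemma config_rot[simp]: "config n m x \<Longrightarrow> config n m (rot_cfg n k x)"
  using n by (simp add: config_def rot_cfg_def)

lemma add_comm: "add_cfg n m x y = add_cfg n m y x"
  by (auto simp add: add_cfg_def add.commute fun_eq_iff)

lemma add_assoc: "add_cfg n m (add_cfg n m x y) z = add_cfg n m x (add_cfg n m y z)"
  by (auto simp add: add_cfg_def fun_eq_iff mod_add_left_eq mod_add_right_eq add.assoc)

lemma add_zero[simp]: "config n m x \<Longrightarrow> add_cfg n m x zc = x"
  by (auto simp: add_cfg_def zc_def config_def fun_eq_iff)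

lemma zero_add[simp]: "config n m x \<Longrightarrow> add_cfg n m zc x = x"
  by (auto simp: add_cfg_def zc_def config_def fun_eq_iff)

lemma add_neg[simp]: "config n m x \<Longrightarrow> add_cfg n m x (neg_cfg n m x) = zc"
proof -
  assume c: "config n m x"
  show ?thesis
  proof (rule ext)
    fix i show "add_cfg n m x (neg_cfg n m x) i = zc i"
    proof (cases "i < n")
      case True
      then have "x i < m" using c by (simp add: config_def)
      then have "(x i + (m - x i) mod m) mod m = 0"
        by (metis le_add_diff_inverse less_imp_le_nat mod_add_right_eq mod_self)
      then show ?thesis using True by (simp add: add_cfg_def neg_cfg_def zc_def)
    qed (simp add: add_cfg_def zc_def)
  qed
qed

lemma rot_add: "rot_cfg n k (add_cfg n m x y) = add_cfg n m (rot_cfg n k x) (rot_cfg n k y)"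
  using n by (auto simp: rot_cfg_def add_cfg_def fun_eq_iff)

lemma rot_zc[simp]: "rot_cfg n k zc = zc"
  by (auto simp: rot_cfg_def zc_def fun_eq_iff)

lemma rot_neg: "rot_cfg n k (neg_cfg n m x) = neg_cfg n m (rot_cfg n k x)"
  using n by (auto simp: rot_cfg_def neg_cfg_def fun_eq_iff)

lemma rot_rot: "rot_cfg n a (rot_cfg n b x) = rot_cfg n (a + b) x"
proof (rule ext)
  fix j show "rot_cfg n a (rot_cfg n b x) j = rot_cfg n (a + b) x j"
  proof (cases "j < n")
    case True
    define j' where "j' = (j + n - a mod n) mod n"
    have j': "j' < n" using n by (simp add: j'_def)
    have jj: "int j' = (int j - int a) mod int n" unfolding j'_def by (rule idx_int[OF n True])
    have "int ((j' + n - b mod n) mod n) = (int j' - int b) mod int n" using idx_int[OF n j'] .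
    also have "\<dots> = ((int j - int a) mod int n - int b) mod int n" by (simp only: jj)
    also have "\<dots> = (int j - int (a + b)) mod int n" by (simp add: mod_diff_left_eq diff_diff_eq)
    also have "\<dots> = int ((j + n - (a + b) mod n) mod n)" by (rule idx_int[OF n True, symmetric])
    finally have "(j' + n - b mod n) mod n = (j + n - (a + b) mod n) mod n" by (simp only: of_nat_eq_iff)
    moreover have "rot_cfg n a (rot_cfg n b x) j = x ((j' + n - b mod n) mod n)"
      using True j' unfolding rot_cfg_def j'_def[symmetric] by (simp only: if_True)
    moreover have "rot_cfg n (a + b) x j = x ((j + n - (a + b) mod n) mod n)"
      using True unfolding rot_cfg_def by (simp only: if_True)
    ultimately show ?thesis by (simp only:)
  qed (simp add: rot_cfg_def)
qed

lemma rot0: "config n m x \<Longrightarrow> rot_cfg n 0 x = x"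
  by (auto simp: rot_cfg_def config_def fun_eq_iff)

lemma rot_n: "config n m x \<Longrightarrow> rot_cfg n n x = x"
  by (auto simp: rot_cfg_def config_def fun_eq_iff)

lemma add_left_comm: "add_cfg n m x (add_cfg n m y z) = add_cfg n m y (add_cfg n m x z)"
  by (metis add_assoc add_comm)

lemma neg_add_distrib: "config n m x \<Longrightarrow> config n m y \<Longrightarrow>
   neg_cfg n m (add_cfg n m x y) = add_cfg n m (neg_cfg n m x) (neg_cfg n m y)"
proof -
  assume cx: "config n m x" and cy: "config n m y"
  define X where "X = add_cfg n m x y"
  define N where "N = add_cfg n m (neg_cfg n m x) (neg_cfg n m y)"
  have "add_cfg n m X N = add_cfg n m (add_cfg n m x (neg_cfg n m x)) (add_cfg n m y (neg_cfg n m y))"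
    unfolding X_def N_def by (simp only: add_assoc add_left_comm)
  also have "\<dots> = zc" using cx cy by simp
  finally have XN: "add_cfg n m X N = zc" .
  have cX: "config n m X" "config n m N" unfolding X_def N_def by simp_all
  have "neg_cfg n m X = add_cfg n m (neg_cfg n m X) (add_cfg n m X N)" using XN by simp
  also have "\<dots> = add_cfg n m (add_cfg n m X (neg_cfg n m X)) N" by (simp only: add_assoc add_left_comm)
  also have "\<dots> = N" using cX by simp
  finally show ?thesis unfolding X_def N_def .
qed

lemma neg_neg: "config n m x \<Longrightarrow> neg_cfg n m (neg_cfg n m x) = x"
proof -
  assume cx: "config n m x"
  have "neg_cfg n m (neg_cfg n m x) = add_cfg n m (neg_cfg n m (neg_cfg n m x)) (add_cfg n m x (neg_cfg n m x))"
    using cx by simp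
  also have "\<dots> = add_cfg n m x (add_cfg n m (neg_cfg n m x) (neg_cfg n m (neg_cfg n m x)))"
    by (simp only: add_assoc add_left_comm add_comm)
  also have "\<dots> = x" using cx by simp
  finally show ?thesis .
qed

lemma neg_zc[simp]: "neg_cfg n m zc = zc"
  using m by (simp add: neg_cfg_def zc_def fun_eq_iff)

end


context
  fixes n m :: nat
  assumes n: "0 < n" and m: "0 < m"
begin

lemmas aa = add_assoc[OF n m] add_comm[OF n m] add_left_comm[OF n m]

definition e0 :: "int \<Rightarrow> nat \<Rightarrow> nat" where
  "e0 a = (\<lambda>i. if i = 0 then nat (a mod int m) else 0)"

definition cfg_of :: "int poly \<Rightarrow> nat \<Rightarrow> nat" where
  "cfg_of f = fold_coeffs (\<lambda>a c. add_cfg n m (e0 a) (rot_cfg n 1 c)) f zc"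

definition Dop :: "(nat \<Rightarrow> nat) \<Rightarrow> nat \<Rightarrow> nat" where
  "Dop x = add_cfg n m (rot_cfg n 1 x) (neg_cfg n m x)"

lemma e0_zero[simp]: "e0 0 = zc" by (simp add: e0_def zc_def fun_eq_iff)

lemma config_e0[simp]: "config n m (e0 a)"
proof -
  have "nat (a mod int m) < m" using m by (simp add: nat_less_iff)
  then show ?thesis using n by (auto simp: config_def e0_def)
qed

lemma e0_add: "e0 (a + b) = add_cfg n m (e0 a) (e0 b)"
proof (rule ext)
  fix i
  show "e0 (a + b) i = add_cfg n m (e0 a) (e0 b) i"
  proof (cases "i = 0")
    case True
    have "int ((nat (a mod int m) + nat (b mod int m)) mod m) = (a mod int m + b mod int m) mod int m"
      using m by (simp add: of_nat_mod)
    also have "\<dots> = (a + b) mod int m" by (simp add: mod_add_eq)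
    finally have "(nat (a mod int m) + nat (b mod int m)) mod m = nat ((a + b) mod int m)" by linarith
    then show ?thesis using True n by (simp add: e0_def add_cfg_def)
  qed (simp add: e0_def add_cfg_def)
qed

lemma cfg_of_0[simp]: "cfg_of 0 = zc" by (simp add: cfg_of_def)

lemma cfg_of_pCons: "cfg_of (pCons a f) = add_cfg n m (e0 a) (rot_cfg n 1 (cfg_of f))"
proof (cases "a = 0 \<and> f = 0")
  case True
  then show ?thesis using m n by simp
next
  case False
  then have "fold_coeffs (\<lambda>a c. add_cfg n m (e0 a) (rot_cfg n 1 c)) (pCons a f)
     = (\<lambda>c. add_cfg n m (e0 a) (rot_cfg n 1 c)) \<circ> fold_coeffs (\<lambda>a c. add_cfg n m (e0 a) (rot_cfg n 1 c)) f"
    by auto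
  then show ?thesis by (simp add: cfg_of_def)
qed

lemma config_cfg_of[simp]: "config n m (cfg_of f)"
  by (induction f) (simp_all add: cfg_of_pCons n m)

lemma cfg_of_add: "cfg_of (f + g) = add_cfg n m (cfg_of f) (cfg_of g)"
proof (induction f g rule: poly_induct2)
  case 0 then show ?case using n m by simp
next
  case (pCons a p b q)
  have "cfg_of (pCons a p + pCons b q) = add_cfg n m (add_cfg n m (e0 a) (e0 b))
          (add_cfg n m (rot_cfg n 1 (cfg_of p)) (rot_cfg n 1 (cfg_of q)))"
    using pCons n m by (simp add: cfg_of_pCons e0_add rot_add)
  also have "\<dots> = add_cfg n m (cfg_of (pCons a p)) (cfg_of (pCons b q))"
    by (simp only: cfg_of_pCons aa)
  finally show ?case .
qed

lemma cfg_of_uminus: "cfg_of (- f) = neg_cfg n m (cfg_of f)"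
proof -
  have "add_cfg n m (cfg_of f) (cfg_of (- f)) = zc" using cfg_of_add[of f "- f"] by simp
  then have "neg_cfg n m (cfg_of f) = add_cfg n m (neg_cfg n m (cfg_of f)) (add_cfg n m (cfg_of f) (cfg_of (- f)))"
    using n m by simp
  also have "\<dots> = add_cfg n m (add_cfg n m (cfg_of f) (neg_cfg n m (cfg_of f))) (cfg_of (- f))"
    by (simp only: aa)
  also have "\<dots> = cfg_of (- f)" using n m by simp
  finally show ?thesis by simp
qed

lemma cfg_of_diff: "cfg_of (f - g) = add_cfg n m (cfg_of f) (neg_cfg n m (cfg_of g))"
  using cfg_of_add[of f "- g"] cfg_of_uminus[of g] by simp

lemma cfg_of_X: "cfg_of (pCons 0 f) = rot_cfg n 1 (cfg_of f)"
  using n m by (simp add: cfg_of_pCons)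

lemma cfg_of_Xpow: "cfg_of ([:0,1:]^k * f) = rot_cfg n k (cfg_of f)"
proof (induction k)
  case 0 then show ?case using n m by (simp add: rot0)
next
  case (Suc k)
  have "[:0,1:]^Suc k * f = pCons 0 ([:0,1:]^k * f)" by (simp add: mult.assoc)
  then show ?case using Suc n m by (simp add: cfg_of_X rot_rot)
qed

lemma cfg_of_smult: "int m dvd c \<Longrightarrow> cfg_of (smult c f) = zc"
proof (induction f)
  case 0 then show ?case by simp
next
  case (pCons a f)
  have "e0 (c * a) = zc" using pCons.prems by (simp add: e0_def zc_def fun_eq_iff)
  then show ?case using pCons n m by (simp add: cfg_of_pCons)
qed

lemma cfg_of_cyc: "cfg_of (([:0,1:]^n - 1) * f) = zc"
proof -
  have "cfg_of (([:0,1:]^n - 1) * f) = cfg_of ([:0,1:]^n * f - f)" by (simp add: algebra_simps)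
  also have "\<dots> = zc" using n m by (simp add: cfg_of_diff cfg_of_Xpow rot_n)
  finally show ?thesis .
qed

lemma Dop_cfg_of: "Dop (cfg_of f) = cfg_of (([:0,1:] - 1) * f)"
proof -
  have "([:0,1:] - 1) * f = pCons 0 f - f" by (simp add: algebra_simps)
  then show ?thesis by (simp add: Dop_def cfg_of_diff cfg_of_X)
qed

lemma Dpow_cfg_of: "(Dop ^^ j) (cfg_of f) = cfg_of (([:0,1:] - 1)^j * f)"
  by (induction j) (simp_all add: Dop_cfg_of mult.assoc)

lemma cfg_of_Poly:
  "length as \<le> n \<Longrightarrow> (\<forall>a\<in>set as. 0 \<le> a \<and> a < int m) \<Longrightarrow>
   cfg_of (Poly as) = (\<lambda>i. if i < length as then nat (as ! i) else 0)"
proof (induction as)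
  case Nil then show ?case by (simp add: zc_def)
next
  case (Cons a as)
  define h where "h = (\<lambda>i. if i < length as then nat (as ! i) else 0)"
  have IH: "cfg_of (Poly as) = h" using Cons by (simp add: h_def)
  show ?case
  proof (rule ext)
    fix i
    show "cfg_of (Poly (a # as)) i = (if i < length (a # as) then nat ((a # as) ! i) else 0)"
    proof (cases "i < n")
      case False
      then show ?thesis using Cons.prems by (simp add: cfg_of_pCons IH add_cfg_def)
    next
      case True
      note iN = True
      show ?thesis
      proof (cases "i = 0")
        case True
        have "h ((i + n - 1 mod n) mod n) = 0"
        proof (cases "n = 1")
          case True then show ?thesis using Cons.prems \<open>i = 0\<close> by (simp add: h_def)
        next
          case False
          then have "(i + n - 1 mod n) mod n = n - 1" using \<open>i = 0\<close> n by simp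
          then show ?thesis using Cons.prems by (simp add: h_def)
        qed
        moreover have "nat (a mod int m) mod m = nat a" using Cons.prems
          by (metis list.set_intros(1) mod_pos_pos_trivial nat_int nat_mod_distrib int_nat_eq zmod_int)
        ultimately show ?thesis using True iN
          by (simp add: cfg_of_pCons IH add_cfg_def rot_cfg_def e0_def)
      next
        case False
        then have n2: "n \<ge> 2" using iN by linarith
        have e1: "i + n - 1 = (i - 1) + n" using False by simp
        have e2: "((i - 1) + n) mod n = (i - 1) mod n" by (rule mod_add_self2)
        have e3: "(i - 1) mod n = i - 1" using iN by (simp add: mod_less)
        have e4: "1 mod n = 1" using n2 by simp
        have idx: "(i + n - 1 mod n) mod n = i - 1" unfolding e4 e1 e2 e3 ..
        have "h (i - 1) < m"
          using Cons.prems False by (auto simp: h_def nat_less_iff)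
        then have "h (i - 1) mod m = h (i - 1)" by simp
        moreover have "h (i - 1) = (if i < length (a # as) then nat ((a # as) ! i) else 0)"
          using False by (auto simp: h_def nth_Cons')
        ultimately show ?thesis using False iN idx
          by (simp add: cfg_of_pCons IH add_cfg_def rot_cfg_def e0_def)
      qed
    qed
  qed
qed

lemma config_is_cfg_of: "config n m x \<Longrightarrow> x = cfg_of (Poly (map (\<lambda>i. int (x i)) [0..<n]))"
proof -
  assume c: "config n m x"
  have "cfg_of (Poly (map (\<lambda>i. int (x i)) [0..<n])) = (\<lambda>i. if i < n then x i else 0)"
    using c by (subst cfg_of_Poly) (auto simp: config_def)
  also have "\<dots> = x" using c by (auto simp: config_def)
  finally show ?thesis by simp
qed

lemma nilpotent:
  assumes "n = 1 \<or> m = 1 \<or> (\<exists>p a b. prime p \<and> n = p ^ a \<and> m = p ^ b)"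
  shows "\<exists>N. \<forall>x. config n m x \<longrightarrow> (Dop ^^ N) x = zc"
proof -
  consider "m = 1" | "n = 1" | p a b where "prime p" "n = p ^ a" "m = p ^ b" using assms by blast
  then show ?thesis
  proof cases
    case 1
    have "\<forall>x. config n m x \<longrightarrow> x = zc"
    proof (intro allI impI ext)
      fix x i assume "config n m x"
      then show "x i = zc i" using 1 unfolding config_def zc_def by (cases "i < n") auto
    qed
    then show ?thesis by (metis funpow_0)
  next
    case 2
    have "\<forall>x. config n m x \<longrightarrow> Dop x = zc"
    proof (intro allI impI)
      fix x assume c: "config n m x"
      then have "rot_cfg n 1 x = x" using rot_n[OF n m c] 2 by simp
      then show "Dop x = zc" using c add_neg[OF n m c] by (simp add: Dop_def)
    qed
    then show ?thesis by (metis One_nat_def funpow.simps comp_id funpow_Suc_right)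
  next
    case 3
    obtain A C where AC: "([:0,1:] - 1)^(p^a * b) = ([:0,1:]^(p^a) - 1) * A + of_nat (p^b) * (C :: int poly)"
      using nilp_poly[OF 3(1)] by blast
    have "\<forall>x. config n m x \<longrightarrow> (Dop ^^ (p^a*b)) x = zc"
    proof (intro allI impI)
      fix x assume "config n m x"
      then obtain f where x: "x = cfg_of f" using config_is_cfg_of by blast
      have "(Dop ^^ (p^a*b)) x = cfg_of (([:0,1:]^n - 1) * (A * f) + smult (int m) (C * f))"
        unfolding x Dpow_cfg_of AC using 3 by (simp add: algebra_simps of_nat_poly)
      also have "\<dots> = zc" using n m by (simp add: cfg_of_add cfg_of_cyc cfg_of_smult)
      finally show "(Dop ^^ (p^a*b)) x = zc" .
    qed
    then show ?thesis by blast
  qed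
qed

end


fun wins :: "nat \<Rightarrow> nat \<Rightarrow> (nat \<Rightarrow> nat) \<Rightarrow> (nat \<Rightarrow> nat) list \<Rightarrow> nat list \<Rightarrow> bool" where
  "wins n m x [] ks = (x = zc)"
| "wins n m x (y # ys) [] = (x = zc)"
| "wins n m x (y # ys) (k # ks) = (x = zc \<or> wins n m (rot_cfg n k (add_cfg n m x y)) ys ks)"

fun fin :: "nat \<Rightarrow> nat \<Rightarrow> (nat \<Rightarrow> nat) \<Rightarrow> (nat \<Rightarrow> nat) list \<Rightarrow> nat list \<Rightarrow> (nat \<Rightarrow> nat)" where
  "fin n m x [] ks = x"
| "fin n m x (y # ys) [] = x"
| "fin n m x (y # ys) (k # ks) = fin n m (rot_cfg n k (add_cfg n m x y)) ys ks"

lemma wins_zc: "wins n m zc ys ks"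
  by (cases "(n, m, zc::nat\<Rightarrow>nat, ys, ks)" rule: wins.cases) auto

lemma wins_append:
  "length ks1 = length ys1 \<Longrightarrow> wins n m x ys1 ks1 \<or> wins n m (fin n m x ys1 ks1) ys2 ks2 \<Longrightarrow>
   wins n m x (ys1 @ ys2) (ks1 @ ks2)"
proof (induction ys1 arbitrary: x ks1)
  case Nil then show ?case by (auto simp: wins_zc)
next
  case (Cons y ys1)
  then obtain k ks1' where ks1: "ks1 = k # ks1'" by (cases ks1) auto
  show ?case using Cons.prems Cons.IH[of ks1'] unfolding ks1 by auto
qed

lemma wins_appendI:
  "length ks = length ys1 + length ys2 \<Longrightarrow>
   wins n m x ys1 (take (length ys1) ks) \<or> wins n m (fin n m x ys1 (take (length ys1) ks)) ys2 (drop (length ys1) ks) \<Longrightarrow>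
   wins n m x (ys1 @ ys2) ks"
  using wins_append[of "take (length ys1) ks" ys1 n m x ys2 "drop (length ys1) ks"] by simp

lemma state_shift: "state n m x (y # ys) (k # ks) (Suc t) = state n m (rot_cfg n k (add_cfg n m x y)) ys ks t"
  by (induction t) auto

lemma wins_iff:
  "length ks = length ys \<Longrightarrow> wins n m x ys ks \<longleftrightarrow> (\<exists>t\<le>length ys. state n m x ys ks t = (\<lambda>_. 0))"
proof (induction ys arbitrary: x ks)
  case Nil then show ?case by (simp add: zc_def)
next
  case (Cons y ys)
  then obtain k ks' where ks: "ks = k # ks'" by (cases ks) auto
  have "wins n m x (y # ys) ks \<longleftrightarrow> x = zc \<or> (\<exists>t\<le>length ys. state n m (rot_cfg n k (add_cfg n m x y)) ys ks' t = (\<lambda>_. 0))"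
    using Cons ks by simp
  also have "\<dots> \<longleftrightarrow> (\<exists>t\<le>length (y # ys). state n m x (y # ys) ks t = (\<lambda>_. 0))"
  proof
    assume "x = zc \<or> (\<exists>t\<le>length ys. state n m (rot_cfg n k (add_cfg n m x y)) ys ks' t = (\<lambda>_. 0))"
    then show "\<exists>t\<le>length (y # ys). state n m x (y # ys) ks t = (\<lambda>_. 0)"
    proof
      assume "x = zc" then show ?thesis by (auto simp: zc_def intro!: exI[of _ 0])
    next
      assume "\<exists>t\<le>length ys. state n m (rot_cfg n k (add_cfg n m x y)) ys ks' t = (\<lambda>_. 0)"
      then obtain t where "t \<le> length ys" "state n m (rot_cfg n k (add_cfg n m x y)) ys ks' t = (\<lambda>_. 0)" by blast
      then show ?thesis unfolding ks by (rule_tac x="Suc t" in exI) (simp only: state_shift, simp)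
    qed
  next
    assume "\<exists>t\<le>length (y # ys). state n m x (y # ys) ks t = (\<lambda>_. 0)"
    then obtain t where t: "t \<le> length (y # ys)" "state n m x (y # ys) ks t = (\<lambda>_. 0)" by blast
    show "x = zc \<or> (\<exists>t\<le>length ys. state n m (rot_cfg n k (add_cfg n m x y)) ys ks' t = (\<lambda>_. 0))"
    proof (cases t)
      case 0 then show ?thesis using t by (simp add: zc_def)
    next
      case (Suc t')
      then show ?thesis using t unfolding ks by (simp only: state_shift) auto
    qed
  qed
  finally show ?case .
qed

lemma finite_configs: "finite {x. config n m x}"
proof -
  have "inj_on (\<lambda>x. map x [0..<n]) {x. config n m x}"
  proof (rule inj_onI)
    fix x y assume "x \<in> {x. config n m x}" "y \<in> {x. config n m x}" "map x [0..<n] = map y [0..<n]"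
    then show "x = y" by (auto simp: config_def fun_eq_iff) (metis not_less)?
  qed
  moreover have "(\<lambda>x. map x [0..<n]) ` {x. config n m x} \<subseteq> {xs. set xs \<subseteq> {..<m} \<and> length xs = n}"
    by (auto simp: config_def)
  moreover have "finite {xs. set xs \<subseteq> {..<m} \<and> length xs = n}"
    by (rule finite_lists_length_eq) simp
  ultimately show ?thesis by (meson finite_imageD finite_subset)
qed

context
  fixes n m :: nat
  assumes n: "0 < n" and m: "0 < m"
begin

lemmas aa2 = add_assoc[OF n m] add_comm[OF n m] add_left_comm[OF n m]
lemmas Ddef = Dop_def[OF n m]

abbreviation ad where "ad \<equiv> add_cfg n m"
abbreviation ng where "ng \<equiv> neg_cfg n m"
abbreviation rt where "rt \<equiv> rot_cfg n"
abbreviation DD where "DD \<equiv> Dop n m"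

definition W :: "nat \<Rightarrow> (nat \<Rightarrow> nat) set" where
  "W j = {x. config n m x \<and> (DD ^^ j) x = zc}"

lemma cfgs[simp]: "config n m zc" "config n m (ad x y)" "config n m (ng x)"
  "config n m x \<Longrightarrow> config n m (rt k x)"
  using n m by simp_all

lemma grp[simp]: "config n m x \<Longrightarrow> ad x zc = x" "config n m x \<Longrightarrow> ad zc x = x"
  "config n m x \<Longrightarrow> ad x (ng x) = zc" "config n m x \<Longrightarrow> ad (ng x) x = zc"
  "ng zc = zc" "rt k zc = zc" "config n m x \<Longrightarrow> ng (ng x) = x"
  using n m by (simp_all add: add_comm[OF n m, of "ng x"] neg_neg)

lemma grp_cancel1: "config n m v \<Longrightarrow> config n m y \<Longrightarrow> ad (ad v y) (ng v) = y"
proof -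
  assume "config n m v" "config n m y"
  then have "ad (ad v y) (ng v) = ad y (ad v (ng v))" by (simp only: aa2)
  then show ?thesis using \<open>config n m v\<close> \<open>config n m y\<close> by simp
qed

lemma grp_chain: "config n m b \<Longrightarrow> ad (ad a (ng b)) (ad b (ng c)) = ad a (ng c)"
proof -
  assume b: "config n m b"
  have "ad (ad a (ng b)) (ad b (ng c)) = ad a (ad (ad b (ng b)) (ng c))" by (simp only: aa2)
  also have "\<dots> = ad a (ng c)" using b by simp
  finally show ?thesis .
qed

lemma grp_back: "config n m b \<Longrightarrow> config n m a \<Longrightarrow> ad (ad a (ng b)) b = a"
proof -
  assume b: "config n m b" and a: "config n m a"
  have "ad (ad a (ng b)) b = ad a (ad b (ng b))" by (simp only: aa2)
  then show ?thesis using a b by simp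
qed

lemma Dop_zc[simp]: "DD zc = zc" using n m by (simp add: Ddef)
lemma Dpow_zc[simp]: "(DD ^^ j) zc = zc" by (induction j) simp_all
lemma config_Dop[simp]: "config n m (DD x)" unfolding Ddef by (rule cfgs(2))
lemma config_Dpow[simp]: "config n m x \<Longrightarrow> config n m ((DD ^^ j) x)" by (induction j) simp_all

lemma Dop_add: "config n m x \<Longrightarrow> config n m y \<Longrightarrow> DD (ad x y) = ad (DD x) (DD y)"
proof -
  assume x: "config n m x" and y: "config n m y"
  have "DD (ad x y) = ad (ad (rt 1 x) (rt 1 y)) (ad (ng x) (ng y))"
    using x y n m by (simp add: Ddef rot_add neg_add_distrib)
  also have "\<dots> = ad (DD x) (DD y)" by (simp only: Ddef aa2)
  finally show ?thesis .
qed

lemma Dpow_add: "config n m x \<Longrightarrow> config n m y \<Longrightarrow> (DD ^^ j) (ad x y) = ad ((DD ^^ j) x) ((DD ^^ j) y)"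
  by (induction j) (simp_all add: Dop_add)

lemma Dop_neg: "config n m x \<Longrightarrow> DD (ng x) = ng (DD x)"
  using n m by (simp add: Ddef rot_neg neg_add_distrib neg_neg)

lemma Dpow_neg: "config n m x \<Longrightarrow> (DD ^^ j) (ng x) = ng ((DD ^^ j) x)"
  by (induction j) (simp_all add: Dop_neg)

lemma Dop_rot: "config n m x \<Longrightarrow> DD (rt k x) = rt k (DD x)"
proof -
  assume x: "config n m x"
  have "rt k (rt 1 x) = rt 1 (rt k x)" using n m by (simp add: rot_rot add.commute)
  then show ?thesis using x n m by (simp add: Ddef rot_add rot_neg)
qed

lemma Dpow_rot: "config n m x \<Longrightarrow> (DD ^^ j) (rt k x) = rt k ((DD ^^ j) x)"
  by (induction j) (simp_all add: Dop_rot)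

lemma W_zc[simp]: "zc \<in> W j" by (simp add: W_def)
lemma W_cfg: "x \<in> W j \<Longrightarrow> config n m x" by (simp add: W_def)
lemma W_add: "x \<in> W j \<Longrightarrow> y \<in> W j \<Longrightarrow> ad x y \<in> W j"
  using n m by (simp add: W_def Dpow_add)
lemma W_neg: "x \<in> W j \<Longrightarrow> ng x \<in> W j"
  using n m by (simp add: W_def Dpow_neg)
lemma W_rot: "x \<in> W j \<Longrightarrow> rt k x \<in> W j"
  using n m by (simp add: W_def Dpow_rot)
lemma W_mono: "x \<in> W j \<Longrightarrow> x \<in> W (Suc j)"
  by (simp add: W_def)
lemma W_D: "x \<in> W (Suc j) \<Longrightarrow> DD x \<in> W j"
  by (simp add: W_def funpow_Suc_right[of j] del: funpow.simps)
lemma W0: "W 0 = {zc}" by (auto simp: W_def)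

lemma W_step: "x \<in> W (Suc j) \<Longrightarrow> ad (rt k x) (ng x) \<in> W j"
proof (induction k)
  case 0 then show ?case using n m W_cfg[OF 0] by (simp add: rot0)
next
  case (Suc k)
  have cx: "config n m x" using Suc.prems by (rule W_cfg)
  define w where "w = ad (rt k x) (ng x)"
  have w: "w \<in> W j" using Suc by (simp add: w_def)
  have rk: "rt k x = ad w x" using cx by (simp add: w_def grp_back)
  have "rt (Suc k) x = rt 1 (rt k x)" using n m by (simp add: rot_rot)
  then have "ad (rt (Suc k) x) (ng x) = ad (ad (rt 1 w) (rt 1 x)) (ng x)" using n m by (simp add: rk rot_add)
  also have "\<dots> = ad (rt 1 w) (DD x)" by (simp only: Ddef aa2)
  finally show ?case using W_add[OF W_rot[OF w] W_D[OF Suc.prems]] by simp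
qed

definition eqv where "eqv j a b \<longleftrightarrow> ad a (ng b) \<in> W j"

lemma eqv_refl: "config n m a \<Longrightarrow> eqv j a a" by (simp add: eqv_def)

lemma eqv_trans: "config n m b \<Longrightarrow> eqv j a b \<Longrightarrow> eqv j b c \<Longrightarrow> eqv j a c"
  unfolding eqv_def using W_add grp_chain by metis

lemma eqv_sym: "config n m a \<Longrightarrow> config n m b \<Longrightarrow> eqv j a b \<Longrightarrow> eqv j b a"
proof -
  assume a: "config n m a" and b: "config n m b" and e: "eqv j a b"
  have "ng (ad a (ng b)) = ad b (ng a)" using a b n m by (simp add: neg_add_distrib neg_neg aa2)
  then show ?thesis using W_neg e by (metis eqv_def)
qed

lemma eqv_add: "config n m a \<Longrightarrow> config n m b \<Longrightarrow> config n m y \<Longrightarrow> eqv j a b \<Longrightarrow> eqv j (ad a y) (ad b y)"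
proof -
  assume a: "config n m a" and b: "config n m b" and y: "config n m y" and e: "eqv j a b"
  have "ad (ad a y) (ng (ad b y)) = ad (ad a (ng b)) (ad y (ng y))"
    using b y n m by (simp only: neg_add_distrib aa2)
  also have "\<dots> = ad a (ng b)" using y a by simp
  finally show ?thesis using e by (simp add: eqv_def)
qed

lemma eqv_rot: "a \<in> W (Suc j) \<Longrightarrow> eqv j (rt k a) a"
  by (simp add: eqv_def W_step)

lemma eqv_W: "config n m b \<Longrightarrow> config n m a \<Longrightarrow> eqv j a b \<Longrightarrow> b \<in> W j \<Longrightarrow> a \<in> W j"
  unfolding eqv_def by (metis W_add grp_back)

lemma fin_eqv:
  "set ys \<subseteq> W j \<Longrightarrow> v \<in> W (Suc j) \<Longrightarrow> length ks = length ys \<Longrightarrow>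
   fin n m v ys ks \<in> W (Suc j) \<and> eqv j (fin n m v ys ks) v"
proof (induction ys arbitrary: v ks)
  case Nil then show ?case using W_cfg by (simp add: eqv_refl)
next
  case (Cons y ys)
  then obtain k ks' where ks: "ks = k # ks'" by (cases ks) auto
  have y: "y \<in> W j" "y \<in> W (Suc j)" using Cons.prems W_mono by auto
  define u where "u = ad v y"
  have u: "u \<in> W (Suc j)" using W_add Cons.prems y by (simp add: u_def)
  define v' where "v' = rt k u"
  have v': "v' \<in> W (Suc j)" using W_rot u by (simp add: v'_def)
  have e1: "eqv j v' u" by (simp add: v'_def eqv_rot u)
  have e2: "eqv j u v" using grp_cancel1 W_cfg[OF Cons.prems(2)] W_cfg[OF y(1)] y(1)
    by (simp add: eqv_def u_def)
  have e3: "eqv j v' v" using eqv_trans[OF W_cfg[OF u] e1 e2] .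
  have IH: "fin n m v' ys ks' \<in> W (Suc j) \<and> eqv j (fin n m v' ys ks') v'"
    using Cons.IH[OF _ v'] Cons.prems ks by auto
  have "fin n m v (y # ys) ks = fin n m v' ys ks'" by (simp add: ks v'_def u_def)
  then show ?case using IH eqv_trans[OF W_cfg[OF v'] _ e3] by auto
qed

lemma blocks:
  fixes S' :: "(nat \<Rightarrow> nat) list" and c0 :: "nat \<Rightarrow> nat"
  assumes S'W: "set S' \<subseteq> W j"
    and S'win: "\<forall>x\<in>W j. \<forall>ks. length ks = length S' \<longrightarrow> wins n m x S' ks"
    and c0: "c0 \<in> W (Suc j)"
  shows "set L \<subseteq> W (Suc j) \<Longrightarrow> c \<in> W (Suc j) \<Longrightarrow> eqv j c c0 \<Longrightarrow> (\<exists>w\<in>set L. ad c0 w \<in> W j) \<Longrightarrow>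
    length ks = length (concat (map (\<lambda>w. w # S' @ ng w # S') L)) \<Longrightarrow>
    wins n m c (concat (map (\<lambda>w. w # S' @ ng w # S') L)) ks"
proof (induction L arbitrary: c ks)
  case Nil then show ?case by simp
next
  case (Cons w L)
  define R where "R = concat (map (\<lambda>w. w # S' @ ng w # S') L)"
  have wW: "w \<in> W (Suc j)" using Cons.prems by simp
  have cfg_c0: "config n m c0" using c0 W_cfg by blast
  have cfg_c: "config n m c" using Cons.prems W_cfg by blast
  have cfg_w: "config n m w" using wW W_cfg by blast
  obtain k1 ks' where ks: "ks = k1 # ks'" using Cons.prems by (cases ks) auto
  have lks': "length ks' = length S' + length ((ng w # S') @ R)"
    using Cons.prems(5) ks by (simp add: R_def)
  define c1 where "c1 = rt k1 (ad c w)"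
  have c1W: "c1 \<in> W (Suc j)" unfolding c1_def using W_rot W_add Cons.prems wW by simp
  have cfg_c1: "config n m c1" using c1W W_cfg by blast
  have e1: "eqv j c1 (ad c0 w)"
  proof -
    have "eqv j c1 (ad c w)" unfolding c1_def using eqv_rot W_add Cons.prems wW by simp
    moreover have "eqv j (ad c w) (ad c0 w)" using eqv_add cfg_c cfg_c0 cfg_w Cons.prems(3) by blast
    ultimately show ?thesis using eqv_trans by (meson cfgs(2))
  qed
  have goal: "wins n m c1 (S' @ (ng w # S') @ R) ks'"
  proof (rule wins_appendI[OF lks'])
    show "wins n m c1 S' (take (length S') ks') \<or>
      wins n m (fin n m c1 S' (take (length S') ks')) ((ng w # S') @ R) (drop (length S') ks')"
    proof (cases "ad c0 w \<in> W j")
      case True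
      then have "c1 \<in> W j" using eqv_W cfg_c1 e1 by (meson cfgs(2))
      then show ?thesis using S'win lks' by auto
    next
      case False
      then obtain w' where w': "w' \<in> set L" "ad c0 w' \<in> W j" using Cons.prems(4) by auto
      define c2 where "c2 = fin n m c1 S' (take (length S') ks')"
      have f2: "c2 \<in> W (Suc j) \<and> eqv j c2 c1" unfolding c2_def
        using fin_eqv[OF S'W c1W] lks' by simp
      have cfg_c2: "config n m c2" using f2 W_cfg by blast
      have e2: "eqv j c2 (ad c0 w)" using eqv_trans[OF cfg_c1] f2 e1 by blast
      define ks2 where "ks2 = drop (length S') ks'"
      obtain k2 ks3 where ks2: "ks2 = k2 # ks3" using lks' by (cases ks2) (auto simp: ks2_def)
      have lks3: "length ks3 = length S' + length R"
        using lks' arg_cong[OF ks2[unfolded ks2_def], of length] by simp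
      define c3 where "c3 = rt k2 (ad c2 (ng w))"
      have c3W: "c3 \<in> W (Suc j)" unfolding c3_def using W_rot W_add W_neg f2 wW by simp
      have e3: "eqv j c3 c0"
      proof -
        have "eqv j c3 (ad c2 (ng w))" unfolding c3_def using eqv_rot W_add W_neg f2 wW by simp
        moreover have "eqv j (ad c2 (ng w)) (ad (ad c0 w) (ng w))"
          using eqv_add[OF cfg_c2 _ _ e2] by simp
        moreover have "ad (ad c0 w) (ng w) = c0"
          using cfg_c0 cfg_w by (simp only: aa2 grp)
        ultimately show ?thesis using eqv_trans by (metis cfgs(2))
      qed
      have "wins n m c3 (S' @ R) ks3"
      proof (rule wins_appendI[OF lks3])
        define c4 where "c4 = fin n m c3 S' (take (length S') ks3)"
        have f4: "c4 \<in> W (Suc j) \<and> eqv j c4 c3" unfolding c4_def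
          using fin_eqv[OF S'W c3W] lks3 by simp
        have "eqv j c4 c0" using eqv_trans[OF W_cfg[OF c3W]] f4 e3 by blast
        have lR: "length (drop (length S') ks3) = length (concat (map (\<lambda>w. w # S' @ ng w # S') L))"
          using lks3 by (simp add: R_def)
        have "wins n m c4 R (drop (length S') ks3)"
          unfolding R_def
        proof (rule Cons.IH)
          show "set L \<subseteq> W (Suc j)" using Cons.prems(1) by simp
          show "c4 \<in> W (Suc j)" using f4 by simp
          show "eqv j c4 c0" by fact
          show "\<exists>w\<in>set L. ad c0 w \<in> W j" using w' by blast
        qed (rule lR)
        then show "wins n m c3 S' (take (length S') ks3) \<or>
          wins n m (fin n m c3 S' (take (length S') ks3)) R (drop (length S') ks3)"
          by (simp add: c4_def)
      qed
      then have "wins n m c2 ((ng w # S') @ R) ks2" using ks2 by (simp add: c3_def)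
      then show ?thesis by (simp add: c2_def ks2_def)
    qed
  qed
  show ?case using goal by (simp add: ks c1_def R_def)
qed

lemma strategy_exists: "\<exists>St. set St \<subseteq> W j \<and> (\<forall>x\<in>W j. \<forall>ks. length ks = length St \<longrightarrow> wins n m x St ks)"
proof (induction j)
  case 0 then show ?case by (rule_tac x="[]" in exI) (simp add: W0)
next
  case (Suc j)
  then obtain S' where S'W: "set S' \<subseteq> W j" and S'win: "\<forall>x\<in>W j. \<forall>ks. length ks = length S' \<longrightarrow> wins n m x S' ks"
    by blast
  have "finite (W (Suc j))" using finite_configs[of n m] by (rule finite_subset[rotated]) (auto simp: W_def)
  then obtain L where L: "set L = W (Suc j)" using finite_list by blast
  define S where "S = concat (map (\<lambda>w. w # S' @ ng w # S') L)"
  have "set S \<subseteq> W (Suc j)" using L S'W W_mono W_neg by (auto simp: S_def)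
  moreover have "\<forall>x\<in>W (Suc j). \<forall>ks. length ks = length S \<longrightarrow> wins n m x S ks"
  proof (intro ballI allI impI)
    fix x and ks :: "nat list" assume x: "x \<in> W (Suc j)" and lks: "length ks = length S"
    have cx: "config n m x" using x W_cfg by blast
    show "wins n m x S ks" unfolding S_def
    proof (rule blocks[OF S'W S'win x])
      show "set L \<subseteq> W (Suc j)" using L by simp
      show "x \<in> W (Suc j)" by (rule x)
      show "eqv j x x" using cx by (rule eqv_refl)
      show "\<exists>w\<in>set L. ad x w \<in> W j" using L W_neg[OF x] cx by (rule_tac x="ng x" in bexI) auto
      show "length ks = length (concat (map (\<lambda>w. w # S' @ ng w # S') L))" using lks by (simp add: S_def)
    qed
  qed
  ultimately show ?case by blast
qed

lemma sufficiency:
  assumes "n = 1 \<or> m = 1 \<or> (\<exists>p a b. prime p \<and> n = p ^ a \<and> m = p ^ b)"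
  shows "player_can_win n m"
proof -
  obtain N where N: "\<forall>x. config n m x \<longrightarrow> (DD ^^ N) x = zc" using nilpotent[OF n m assms] by blast
  then have WN: "W N = {x. config n m x}" by (auto simp: W_def)
  obtain St where St: "set St \<subseteq> W N" "\<forall>x\<in>W N. \<forall>ks. length ks = length St \<longrightarrow> wins n m x St ks"
    using strategy_exists by blast
  have "winning n m St"
    unfolding winning_def using St WN wins_iff by auto
  then show ?thesis by (auto simp: player_can_win_def)
qed

end


lemma comb_key:
  fixes a b :: "nat \<Rightarrow> int" and P :: int
  assumes q: "q \<ge> 2" and cop: "\<And>d. P dvd int q * d \<Longrightarrow> P dvd d"
    and nc: "\<exists>j<q. \<not> P dvd (a j - a 0)"
    and H1: "\<forall>j<q. P dvd (a j + b j - (a 0 + b 0))"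
    and H2: "\<forall>j<q. P dvd (a (nat ((int j - 1) mod int q)) + b j - (a (nat ((int 0 - 1) mod int q)) + b 0))"
  shows False
proof -
  have q1: "nat ((int 0 - 1) mod int q) = q - 1" using q
    by (simp add: zmod_minus1 nat_diff_distrib)
  define d where "d = a 0 - a (q - 1)"
  have step: "P dvd (a j - a (j - 1) - d)" if "1 \<le> j" "j < q" for j
  proof -
    have "nat ((int j - 1) mod int q) = j - 1" using that by (simp add: of_nat_diff[symmetric] nat_int)
    then have A2: "P dvd (a (j - 1) + b j - (a (q - 1) + b 0))" using H2 that q1 by auto
    have A1: "P dvd (a j + b j - (a 0 + b 0))" using H1 that by auto
    have "P dvd ((a j + b j - (a 0 + b 0)) - (a (j - 1) + b j - (a (q - 1) + b 0)))"
      by (rule dvd_diff[OF A1 A2])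
    then show ?thesis by (simp add: d_def algebra_simps)
  qed
  have lin: "P dvd (a j - a 0 - int j * d)" if "j < q" for j
    using that
  proof (induction j)
    case 0 then show ?case by simp
  next
    case (Suc j)
    have "P dvd (a (Suc j) - a j - d)" using step[of "Suc j"] Suc.prems by simp
    moreover have "P dvd (a j - a 0 - int j * d)" using Suc by simp
    ultimately have "P dvd ((a (Suc j) - a j - d) + (a j - a 0 - int j * d))" by (rule dvd_add)
    then show ?case by (simp add: algebra_simps)
  qed
  have "P dvd (a (q - 1) - a 0 - int (q - 1) * d)" using lin[of "q - 1"] q by simp
  moreover have "a (q - 1) - a 0 - int (q - 1) * d = - (int q * d)"
    using q by (simp add: d_def of_nat_diff algebra_simps)
  ultimately have "P dvd int q * d" by simp
  then have Pd: "P dvd d" by (rule cop)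
  obtain j where j: "j < q" "\<not> P dvd (a j - a 0)" using nc by blast
  have "P dvd (a j - a 0 - int j * d)" using lin j by simp
  moreover have "P dvd int j * d" using Pd by simp
  ultimately have "P dvd ((a j - a 0 - int j * d) + int j * d)" by (rule dvd_add)
  then show False using j by simp
qed


context
  fixes n m p q :: nat
  assumes n: "0 < n" and m: "0 < m" and p: "prime p" and q: "prime q"
    and pm: "p dvd m" and qn: "q dvd n" and pq: "p \<noteq> q"
begin

definition uu :: "(nat \<Rightarrow> nat) \<Rightarrow> nat \<Rightarrow> int" where
  "uu x j = (\<Sum>i\<in>{i. i < n \<and> i mod q = j}. int (x i))"

definition NC :: "(nat \<Rightarrow> nat) \<Rightarrow> bool" where
  "NC x \<longleftrightarrow> (\<exists>j<q. \<not> int p dvd (uu x j - uu x 0))"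

lemma q2: "q \<ge> 2" using q prime_ge_2_nat by blast
lemma nq: "q \<le> n" using qn n dvd_imp_le by blast

lemma cop: "int p dvd int q * d \<Longrightarrow> int p dvd d"
proof -
  assume h: "int p dvd int q * d"
  have "prime (int p)" using p by simp
  moreover have "\<not> int p dvd int q"
    using p q pq primes_dvd_imp_eq[of p q] by (metis int_dvd_int_iff)
  ultimately show ?thesis using h prime_dvd_mult_iff by blast
qed

lemma fin_cls: "finite {i. i < n \<and> i mod q = j}" by simp

lemma uu_add: "int p dvd (uu (add_cfg n m x y) j - (uu x j + uu y j))"
proof -
  have "uu (add_cfg n m x y) j - (uu x j + uu y j) =
      (\<Sum>i\<in>{i. i < n \<and> i mod q = j}. int ((x i + y i) mod m) - int (x i + y i))"
    by (simp add: uu_def add_cfg_def sum_subtractf sum.distrib)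
  also have "int p dvd \<dots>"
  proof (rule dvd_sum)
    fix i
    define z where "z = int (x i + y i)"
    have "(z mod int m - z) mod int m = 0" by (simp add: mod_diff_left_eq)
    then have "int m dvd z mod int m - z" by (simp add: dvd_eq_mod_eq_0)
    then have "int m dvd int ((x i + y i) mod m) - int (x i + y i)"
      by (simp add: z_def of_nat_mod)
    then show "int p dvd int ((x i + y i) mod m) - int (x i + y i)"
      using pm by (meson dvd_trans int_dvd_int_iff)
  qed
  finally show ?thesis .
qed

lemma uu_rot0: "uu (rot_cfg n 0 w) j = uu w j"
  unfolding uu_def by (rule sum.cong) (auto simp: rot_cfg_def)

lemma uu_rot1:
  assumes j: "j < q"
  shows "uu (rot_cfg n 1 w) j = uu w (nat ((int j - 1) mod int q))"
proof -
  define g where "g i = (i + n - 1 mod n) mod n" for i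
  define h where "h i = (i + 1) mod n" for i
  define j' where "j' = nat ((int j - 1) mod int q)"
  have qpos: "0 < q" using q2 by simp
  have gi: "int (g i) = (int i - 1) mod int n" if "i < n" for i
    using idx_int[OF n that, of 1] by (simp add: g_def)
  have hi: "int (h i) = (int i + 1) mod int n" for i by (simp add: h_def of_nat_mod ac_simps)
  have qn': "int q dvd int n" using qn by simp
  have "uu (rot_cfg n 1 w) j = (\<Sum>i\<in>{i. i < n \<and> i mod q = j}. int (w (g i)))"
    unfolding uu_def by (rule sum.cong) (auto simp: rot_cfg_def g_def)
  also have "\<dots> = (\<Sum>i\<in>{i. i < n \<and> i mod q = j'}. int (w i))"
  proof (rule sum.reindex_bij_witness[where i = h and j = g])
    fix a assume a: "a \<in> {i. i < n \<and> i mod q = j}"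
    have "int (h (g a)) = ((int a - 1) mod int n + 1) mod int n" using hi gi a by simp
    also have "\<dots> = int a" using a by (simp add: mod_add_left_eq)
    finally show "h (g a) = a" by simp
    have ga: "g a < n" using n by (simp add: g_def)
    have E1: "int (g a mod q) = (int a - 1) mod int q"
    proof -
      have "int (g a mod q) = int (g a) mod int q" by (simp add: of_nat_mod)
      also have "\<dots> = ((int a - 1) mod int n) mod int q" using gi a by simp
      also have "\<dots> = (int a - 1) mod int q" using qn' by (rule mod_mod_cancel)
      finally show ?thesis .
    qed
    have E2: "int j' = (int j - 1) mod int q" using qpos by (simp add: j'_def)
    have amq: "a mod q = j" using a by simp
    have jj: "int j = int a mod int q" using amq by (simp add: of_nat_mod[symmetric])
    have E3: "(int j - 1) mod int q = (int a - 1) mod int q"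
      unfolding jj by (rule mod_diff_left_eq)
    have "int (g a mod q) = int j'" unfolding E1 E2 E3 ..
    then have "g a mod q = j'" by (simp only: of_nat_eq_iff)
    then show "g a \<in> {i. i < n \<and> i mod q = j'}" using ga by simp
    show "int (w (g a)) = int (w (g a))" ..
  next
    fix b assume b: "b \<in> {i. i < n \<and> i mod q = j'}"
    have hb: "h b < n" using n by (simp add: h_def)
    have "int (g (h b)) = (int (h b) - 1) mod int n" using gi[OF hb] .
    also have "\<dots> = ((int b + 1) mod int n - 1) mod int n" by (simp only: hi)
    also have "\<dots> = int b" using b by (simp add: mod_diff_left_eq)
    finally show "g (h b) = b" by simp
    have "int (h b mod q) = int (h b) mod int q" by (simp add: of_nat_mod)
    also have "\<dots> = ((int b + 1) mod int n) mod int q" using hi by simp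
    also have "\<dots> = (int b + 1) mod int q" using qn' by (rule mod_mod_cancel)
    also have "\<dots> = (int (b mod q) + 1) mod int q" by (simp add: of_nat_mod mod_add_left_eq)
    also have "\<dots> = ((int j - 1) mod int q + 1) mod int q" using b qpos by (simp add: j'_def)
    also have "\<dots> = int j" using j by (simp add: mod_add_left_eq)
    finally have "h b mod q = j" by (simp only: of_nat_eq_iff)
    then show "h b \<in> {i. i < n \<and> i mod q = j}" using hb by simp
  qed
  finally show ?thesis by (simp add: j'_def uu_def)
qed


lemma dvd3: "(P::int) dvd (U - U0) \<Longrightarrow> P dvd (U - V) \<Longrightarrow> P dvd (U0 - V0) \<Longrightarrow> P dvd (V - V0)"
proof -
  assume a: "P dvd (U - U0)" and b: "P dvd (U - V)" and c: "P dvd (U0 - V0)"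
  have "P dvd ((U - U0) - (U - V) + (U0 - V0))" by (rule dvd_add[OF dvd_diff[OF a b] c])
  moreover have "(U - U0) - (U - V) + (U0 - V0) = V - V0" by simp
  ultimately show ?thesis by simp
qed

lemma uu_zc: "uu zc j = 0" by (simp add: uu_def zc_def)

lemma NC_nz: "NC x \<Longrightarrow> x \<noteq> zc"
  by (auto simp: NC_def uu_zc)

lemma jm_inv: "i < q \<Longrightarrow> nat ((int ((i + 1) mod q) - 1) mod int q) = i"
proof -
  assume i: "i < q"
  have "int ((i + 1) mod q) = (int i + 1) mod int q" by (simp add: of_nat_mod ac_simps)
  then have "(int ((i + 1) mod q) - 1) mod int q = ((int i + 1) mod int q - 1) mod int q" by simp
  also have "\<dots> = int i" using i by (simp add: mod_diff_left_eq)
  finally show ?thesis by simp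
qed

lemma NC_rot1: "NC w \<Longrightarrow> NC (rot_cfg n 1 w)"
proof (rule ccontr)
  assume nc: "NC w" and nn: "\<not> NC (rot_cfg n 1 w)"
  have q0: "0 < q" using q2 by simp
  define c where "c = uu (rot_cfg n 1 w) 0"
  have all: "int p dvd (uu w i - c)" if "i < q" for i
  proof -
    have "(i + 1) mod q < q" using q0 by simp
    then have "int p dvd (uu (rot_cfg n 1 w) ((i + 1) mod q) - c)" using nn by (auto simp: NC_def c_def)
    moreover have "uu (rot_cfg n 1 w) ((i + 1) mod q) = uu w i"
      using uu_rot1[of "(i + 1) mod q" w] jm_inv[OF that] q0 by simp
    ultimately show ?thesis by simp
  qed
  obtain j where j: "j < q" "\<not> int p dvd (uu w j - uu w 0)" using nc by (auto simp: NC_def)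
  have "int p dvd ((uu w j - c) - (uu w 0 - c))" using all[OF j(1)] all[OF q0] by (rule dvd_diff)
  then show False using j by simp
qed

lemma key_step: "NC w \<Longrightarrow> \<exists>k\<in>{0::nat, 1}. NC (rot_cfg n k w) \<and> NC (add_cfg n m (rot_cfg n k w) y)"
proof (rule ccontr)
  assume nc: "NC w" and nk: "\<not> (\<exists>k\<in>{0::nat, 1}. NC (rot_cfg n k w) \<and> NC (add_cfg n m (rot_cfg n k w) y))"
  have q0: "0 < q" using q2 by simp
  have nc0: "NC (rot_cfg n 0 w)" using nc by (simp add: NC_def uu_rot0)
  have nc1: "NC (rot_cfg n 1 w)" using NC_rot1[OF nc] .
  have n0: "\<not> NC (add_cfg n m (rot_cfg n 0 w) y)" using nk nc0 by auto
  have n1: "\<not> NC (add_cfg n m (rot_cfg n 1 w) y)" using nk nc1 by auto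
  define a where "a = uu w"
  define b where "b = uu y"
  show False
  proof (rule comb_key[OF q2 cop])
    show "\<exists>j<q. \<not> int p dvd (a j - a 0)" using nc by (simp add: NC_def a_def)
    show "\<forall>j<q. int p dvd (a j + b j - (a 0 + b 0))"
    proof (intro allI impI)
      fix j assume j: "j < q"
      let ?v = "add_cfg n m (rot_cfg n 0 w) y"
      have h: "int p dvd (uu ?v j - uu ?v 0)" using n0 j by (auto simp: NC_def)
      show "int p dvd (a j + b j - (a 0 + b 0))"
        using dvd3[OF h uu_add[of "rot_cfg n 0 w" y j] uu_add[of "rot_cfg n 0 w" y 0]]
        by (simp add: uu_rot0 a_def b_def)
    qed
    show "\<forall>j<q. int p dvd (a (nat ((int j - 1) mod int q)) + b j - (a (nat ((int 0 - 1) mod int q)) + b 0))"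
    proof (intro allI impI)
      fix j assume j: "j < q"
      let ?v = "add_cfg n m (rot_cfg n 1 w) y"
      have h: "int p dvd (uu ?v j - uu ?v 0)" using n1 j by (auto simp: NC_def)
      have e: "uu (rot_cfg n 1 w) j = a (nat ((int j - 1) mod int q))"
        "uu (rot_cfg n 1 w) 0 = a (nat ((int 0 - 1) mod int q))"
        using uu_rot1[OF j, of w] uu_rot1[OF q0, of w] by (simp_all add: a_def)
      show "int p dvd (a (nat ((int j - 1) mod int q)) + b j - (a (nat ((int 0 - 1) mod int q)) + b 0))"
        using dvd3[OF h uu_add[of "rot_cfg n 1 w" y j] uu_add[of "rot_cfg n 1 w" y 0]]
        unfolding e by (simp add: b_def)
    qed
  qed
qed

lemma adv:
  "NC x \<Longrightarrow> (\<forall>y ys'. ys = y # ys' \<longrightarrow> NC (add_cfg n m x y)) \<Longrightarrow>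
   \<exists>ks. length ks = length ys \<and> set ks \<subseteq> {0, 1} \<and> \<not> wins n m x ys ks"
proof (induction ys arbitrary: x)
  case Nil then show ?case using NC_nz by auto
next
  case (Cons y ys)
  define w where "w = add_cfg n m x y"
  have ncw: "NC w" using Cons.prems by (simp add: w_def)
  define y' where "y' = (case ys of [] \<Rightarrow> zc | z # _ \<Rightarrow> z)"
  obtain k where k: "k \<in> {0, 1}" "NC (rot_cfg n k w)" "NC (add_cfg n m (rot_cfg n k w) y')"
    using key_step[OF ncw, of y'] by blast
  have "\<forall>z zs. ys = z # zs \<longrightarrow> NC (add_cfg n m (rot_cfg n k w) z)" using k(3) by (auto simp: y'_def split: list.splits)
  then obtain ks' where ks': "length ks' = length ys" "set ks' \<subseteq> {0, 1}" "\<not> wins n m (rot_cfg n k w) ys ks'"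
    using Cons.IH[OF k(2)] by blast
  show ?case
    using ks' k(1) NC_nz[OF Cons.prems(1)] by (rule_tac x="k # ks'" in exI) (simp add: w_def)
qed

definition e1 :: "nat \<Rightarrow> nat" where "e1 = (\<lambda>i. if i = 0 then 1 else 0)"

lemma config_e1: "config n m e1"
proof -
  have "p \<le> m" using pm m by (rule dvd_imp_le)
  moreover have "1 < p" using p by (rule prime_gt_1_nat)
  ultimately have "1 < m" by linarith
  then show ?thesis using n by (auto simp: config_def e1_def)
qed

lemma uu_e1: "uu e1 j = (if j = 0 then 1 else 0)"
proof -
  have "uu e1 j = (\<Sum>i\<in>{i. i < n \<and> i mod q = j}. if i = 0 then 1 else 0)"
    unfolding uu_def by (rule sum.cong) (auto simp: e1_def)
  also have "\<dots> = (if 0 \<in> {i. i < n \<and> i mod q = j} then 1 else 0)"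
    by (rule sum.delta) simp
  also have "(0 \<in> {i. i < n \<and> i mod q = j}) = (j = 0)" using n by auto
  finally show ?thesis .
qed

lemma NC_e1: "NC e1"
proof -
  have "1 < q" using q2 by simp
  moreover have "\<not> int p dvd (uu e1 1 - uu e1 0)"
  proof
    assume "int p dvd (uu e1 1 - uu e1 0)"
    then have "int p dvd 1" by (simp add: uu_e1)
    then have "p dvd 1" by (metis int_dvd_int_iff of_nat_1)
    then show False using p by simp
  qed
  ultimately show ?thesis unfolding NC_def by blast
qed

lemma not_winning: "\<not> winning n m ys"
proof
  assume win: "winning n m ys"
  define y' where "y' = (case ys of [] \<Rightarrow> zc | z # _ \<Rightarrow> z)"
  obtain k where k: "k \<in> {0, 1}" "NC (rot_cfg n k e1)" "NC (add_cfg n m (rot_cfg n k e1) y')"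
    using key_step[OF NC_e1, of y'] by blast
  define x0 where "x0 = rot_cfg n k e1"
  have cx0: "config n m x0" using config_e1 n m by (simp add: x0_def)
  have "\<forall>z zs. ys = z # zs \<longrightarrow> NC (add_cfg n m x0 z)" using k(3) by (auto simp: y'_def x0_def split: list.splits)
  then obtain ks where ks: "length ks = length ys" "set ks \<subseteq> {0, 1}" "\<not> wins n m x0 ys ks"
    using adv[of x0 ys] k(2) by (auto simp: x0_def)
  have "\<forall>k\<in>set ks. k < n" using ks(2) q2 nq by auto
  then have "\<exists>t\<le>length ys. state n m x0 ys ks t = (\<lambda>_. 0)"
    using win cx0 ks(1) unfolding winning_def by blast
  then show False using ks wins_iff by blast
qed

end



lemma only_p:
  fixes x p :: nat
  assumes x: "0 < x" and p: "prime p" and only: "\<forall>r. prime r \<and> r dvd x \<longrightarrow> r = p"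
  shows "x = p ^ multiplicity p x"
proof -
  have x0: "x \<noteq> 0" using x by simp
  have nu: "\<not> is_unit p" using p not_prime_unit by blast
  obtain y where y: "x = p ^ multiplicity p x * y" "\<not> p dvd y"
    using multiplicity_decompose'[OF x0 nu] by blast
  have "y = 1"
  proof (rule ccontr)
    assume "y \<noteq> 1"
    then obtain r where r: "prime r" "r dvd y" using prime_factor_nat by blast
    have "y dvd x" using y(1) by (metis dvd_triv_right)
    then have "r dvd x" using r(2) by (rule dvd_trans[rotated])
    then have "r = p" using only r by blast
    then show False using r y by simp
  qed
  then show ?thesis using y by simp
qed

lemma two_primes:
  fixes n m :: nat
  assumes n1: "n > 1" and m1: "m > 1"
    and np: "\<not> (\<exists>p a b. prime p \<and> a > 0 \<and> b > 0 \<and> n = p ^ a \<and> m = p ^ b)"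
  shows "\<exists>p q. prime p \<and> prime q \<and> p dvd m \<and> q dvd n \<and> p \<noteq> q"
proof (rule ccontr)
  assume nex: "\<not> (\<exists>p q. prime p \<and> prime q \<and> p dvd m \<and> q dvd n \<and> p \<noteq> q)"
  have "m \<noteq> 1" using m1 by simp
  then obtain p where p: "prime p" "p dvd m" using prime_factor_nat by blast
  have "n \<noteq> 1" using n1 by simp
  then obtain q where q: "prime q" "q dvd n" using prime_factor_nat by blast
  have pq: "q = p" using nex p q by blast
  have onlym: "\<forall>r. prime r \<and> r dvd m \<longrightarrow> r = p" using nex q pq by blast
  have onlyn: "\<forall>r. prime r \<and> r dvd n \<longrightarrow> r = p" using nex p by blast
  have mm: "m = p ^ multiplicity p m" using only_p[OF _ p(1) onlym] m1 by simp
  have nn: "n = p ^ multiplicity p n" using only_p[OF _ p(1) onlyn] n1 by simp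
  have a: "multiplicity p m > 0"
  proof (rule ccontr)
    assume "\<not> multiplicity p m > 0"
    then have "m = 1" using mm by simp
    then show False using m1 by simp
  qed
  have b: "multiplicity p n > 0"
  proof (rule ccontr)
    assume "\<not> multiplicity p n > 0"
    then have "n = 1" using nn by simp
    then show False using n1 by simp
  qed
  show False using np mm nn p(1) a b by blast
qed

theorem theorem1p1:
  fixes n m :: nat
  assumes "n > 0" and "m > 0"
  shows "player_can_win n m \<longleftrightarrow>
    (n = 1 \<or> m = 1 \<or> (\<exists>p a b. prime p \<and> a > 0 \<and> b > 0 \<and> n = p ^ a \<and> m = p ^ b))"
proof
  assume win: "player_can_win n m"
  show "n = 1 \<or> m = 1 \<or> (\<exists>p a b. prime p \<and> a > 0 \<and> b > 0 \<and> n = p ^ a \<and> m = p ^ b)"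
  proof (rule ccontr)
    assume h: "\<not> (n = 1 \<or> m = 1 \<or> (\<exists>p a b. prime p \<and> a > 0 \<and> b > 0 \<and> n = p ^ a \<and> m = p ^ b))"
    have n1: "n > 1" using h assms by auto
    have m1: "m > 1" using h assms by auto
    have np: "\<not> (\<exists>p a b. prime p \<and> a > 0 \<and> b > 0 \<and> n = p ^ a \<and> m = p ^ b)" using h by simp
    obtain p q where pq: "prime p" "prime q" "p dvd m" "q dvd n" "p \<noteq> q"
      using two_primes[OF n1 m1 np] by blast
    obtain ys where ys: "winning n m ys" using win unfolding player_can_win_def by blast
    show False using not_winning[OF assms pq, of ys] ys by simp
  qed
next
  assume "n = 1 \<or> m = 1 \<or> (\<exists>p a b. prime p \<and> a > 0 \<and> b > 0 \<and> n = p ^ a \<and> m = p ^ b)"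
  then have "n = 1 \<or> m = 1 \<or> (\<exists>p a b. prime p \<and> n = p ^ a \<and> m = p ^ b)" by blast
  then show "player_can_win n m" by (rule sufficiency[OF assms])
qed


end
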